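(* For any $\delta\in(0,1)$, $n\in\mathbb{N}$ and $\lambda\in\left[14\log\frac{4}{\delta},n\right]$, the bit-sum protocol $P_{n,\lambda}$ is $(\varepsilon,\delta)$-differentially private in the shuffled model, where \[ \varepsilon=\sqrt{\frac{32\log\frac{4}{\delta}}{\lambda-\sqrt{2\lambda\log\frac{2}{\delta}}}}\cdot\left(1-\frac{\lambda-\sqrt{2\lambda\log\frac{2}{\delta}}}{n}\right). \]
   Context: An algorithm $M$ on datasets in $\{0,1\}^n$ is $(\varepsilon,\delta)$-differentially private if for all $X,X'$ differing in one user's entry and every set $T$ of outputs, $\Pr[M(X)\in T]\le e^{\varepsilon}\Pr[M(X')\in T]+\delta$. The bit-sum protocol $P_{n,\lambda}$: each of $n$ users with $x_i\in\{0,1\}$ independently draws $b\sim\mathrm{Ber}(\lambda/n)$ and sends the single message $y_i=x_i$ if $b=0$ and a fresh $\mathrm{Ber}(1/2)$ bit if $b=1$; a shuffler outputs the messages in uniformly random order; the analyzer outputs $\frac{n}{n-\lambda}(\sum_i y_i-\lambda/2)$. The protocol is $(\varepsilon,\delta)$-differentially private in the shuffled model if the map from $(x_1,\dots,x_n)$ to the shuffled sequence of messages is $(\varepsilon,\delta)$-differentially private. $\log$ is the natural logarithm. *)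

theory Defs
  imports "HOL-Probability.Probability" "HOL-Combinatorics.Permutations"
begin

text \<open>Datasets are bool lists of length n (user i holds entry i).\<close>

definition neighbouring :: "bool list \<Rightarrow> bool list \<Rightarrow> bool" where
  "neighbouring X X' \<longleftrightarrow> length X = length X' \<and>
     (\<exists>i < length X. \<forall>j. j \<noteq> i \<longrightarrow> X ! j = X' ! j)"

definition diff_private :: "nat \<Rightarrow> (bool list \<Rightarrow> 'b pmf) \<Rightarrow> real \<Rightarrow> real \<Rightarrow> bool" where
  "diff_private n M \<epsilon> \<delta> \<longleftrightarrow>
     (\<forall>X X' T. length X = n \<longrightarrow> length X' = n \<longrightarrow> neighbouring X X' \<longrightarrow>
        measure_pmf.prob (M X) T \<le> exp \<epsilon> * measure_pmf.prob (M X') T + \<delta>)"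

definition randomizer :: "nat \<Rightarrow> real \<Rightarrow> bool \<Rightarrow> bool pmf" where
  "randomizer n lam x = do {
     b \<leftarrow> bernoulli_pmf (lam / real n);
     if b then bernoulli_pmf (1/2) else return_pmf x }"

fun local_msgs :: "nat \<Rightarrow> real \<Rightarrow> bool list \<Rightarrow> bool list pmf" where
  "local_msgs n lam [] = return_pmf []"
| "local_msgs n lam (x # xs) = do {
     y \<leftarrow> randomizer n lam x;
     ys \<leftarrow> local_msgs n lam xs;
     return_pmf (y # ys) }"

definition shuffle :: "'a list \<Rightarrow> 'a list pmf" where
  "shuffle ys = map_pmf (\<lambda>\<sigma>. map (\<lambda>i. ys ! \<sigma> i) [0..<length ys])
                   (pmf_of_set {\<sigma>. \<sigma> permutes {..<length ys}})"

definition shuffled_bitsum :: "nat \<Rightarrow> real \<Rightarrow> bool list \<Rightarrow> bool list pmf" where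
  "shuffled_bitsum n lam X = local_msgs n lam X \<bind> shuffle"

end

theory Submission
  imports Defs
begin

lemma integral_bind_pmf_real:
  fixes f :: "'b \<Rightarrow> real"
  assumes "\<And>x. 0 \<le> f x" "\<And>x. f x \<le> B"
  shows "measure_pmf.expectation (bind_pmf M N) f = measure_pmf.expectation M (\<lambda>x. measure_pmf.expectation (N x) f)"
proof -
  have i1: "integrable (measure_pmf P) f" for P
    by (rule measure_pmf.integrable_const_bound[where B=B]) (use assms in auto)
  have i2: "integrable (measure_pmf M) (\<lambda>x. measure_pmf.expectation (N x) f)"
    apply (rule measure_pmf.integrable_const_bound[where B=B])
    using assms apply (auto intro!: integral_nonneg_AE )
    by (metis assms(2) measure_pmf.prob_space_axioms prob_space.integral_le_const i1 AE_I2)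
  have "ennreal (measure_pmf.expectation (bind_pmf M N) f) = (\<integral>\<^sup>+x. ennreal (f x) \<partial>bind_pmf M N)"
    by (rule nn_integral_eq_integral[symmetric]) (use i1 assms in auto)
  also have "\<dots> = (\<integral>\<^sup>+x. \<integral>\<^sup>+y. ennreal (f y) \<partial>N x \<partial>M)" by simp
  also have "\<dots> = (\<integral>\<^sup>+x. ennreal (measure_pmf.expectation (N x) f) \<partial>M)"
    by (intro nn_integral_cong nn_integral_eq_integral) (use i1 assms in auto)
  also have "\<dots> = ennreal (measure_pmf.expectation M (\<lambda>x. measure_pmf.expectation (N x) f))"
    by (rule nn_integral_eq_integral) (use i2 assms in \<open>auto intro!: integral_nonneg_AE\<close>)
  finally show ?thesis
    by (subst (asm) ennreal_inj) (use assms in \<open>auto intro!: integral_nonneg_AE\<close>)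
qed


definition cnt :: "bool list \<Rightarrow> nat" where "cnt ys = length (filter id ys)"

definition C :: "nat \<Rightarrow> real \<Rightarrow> bool list \<Rightarrow> nat pmf" where
  "C n lam xs = map_pmf cnt (local_msgs n lam xs)"

lemma cnt_Cons[simp]: "cnt (y # ys) = cnt ys + of_bool y"
  by (simp add: cnt_def)

lemma C_Nil: "C n lam [] = return_pmf 0"
  by (simp add: C_def cnt_def)

lemma C_Cons: "C n lam (x # xs) = randomizer n lam x \<bind> (\<lambda>y. map_pmf (\<lambda>k. k + of_bool y) (C n lam xs))"
  by (simp add: C_def map_pmf_def bind_assoc_pmf bind_return_pmf)

lemma C_middle: "C n lam (xs1 @ x # xs2) = randomizer n lam x \<bind> (\<lambda>y. map_pmf (\<lambda>k. k + of_bool y) (C n lam (xs1 @ xs2)))"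
proof (induction xs1)
  case Nil
  then show ?case by (simp add: C_Cons)
next
  case (Cons z xs1)
  have "C n lam ((z # xs1) @ x # xs2) = randomizer n lam z \<bind> (\<lambda>y'. map_pmf (\<lambda>k. k + of_bool y') 
     (randomizer n lam x \<bind> (\<lambda>y. map_pmf (\<lambda>k. k + of_bool y) (C n lam (xs1 @ xs2)))))"
    using Cons by (simp add: C_Cons)
  also have "\<dots> = randomizer n lam x \<bind> (\<lambda>y. map_pmf (\<lambda>k. k + of_bool y) (randomizer n lam z \<bind> (\<lambda>y'. map_pmf (\<lambda>k. k + of_bool y') 
     (C n lam (xs1 @ xs2)))))"
    unfolding map_pmf_def bind_assoc_pmf bind_return_pmf
    apply (subst bind_commute_pmf)
    apply (simp add: algebra_simps)
    done
  finally show ?case by (simp add: C_Cons)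
qed

lemma length_local: "ys \<in> set_pmf (local_msgs n lam X) \<Longrightarrow> length ys = length X"
  by (induction X arbitrary: ys) auto

fun W :: "real \<Rightarrow> bool list \<Rightarrow> (nat \<times> nat) pmf" where
  "W p [] = return_pmf (0, 0)"
| "W p (x # xs) = bernoulli_pmf p \<bind> (\<lambda>r. map_pmf (\<lambda>(c, b). if r then (c, Suc b) else (c + of_bool x, b)) (W p xs))"

lemma C_W:
  assumes "0 \<le> lam / real n" "lam / real n \<le> 1"
  shows "C n lam xs = W (lam / real n) xs \<bind> (\<lambda>(c, b). map_pmf (\<lambda>u. c + u) (binomial_pmf b (1/2)))"
proof (induction xs)
  case Nil
  then show ?case by (simp add: C_Nil bind_return_pmf binomial_pmf_0)
next
  case (Cons x xs)
  have bS: "binomial_pmf (Suc b) (1/2) = binomial_pmf b (1/2) \<bind> (\<lambda>k. bernoulli_pmf (1/2) \<bind> (\<lambda>y. return_pmf (k + of_bool y)))" for b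
    apply (subst binomial_pmf_Suc) apply simp
    apply (subst bind_commute_pmf) apply (simp add: add.commute of_bool_def)
    done
  show ?case
    unfolding C_Cons Cons W.simps randomizer_def
    unfolding map_pmf_def bind_assoc_pmf bind_return_pmf
    apply (rule bind_pmf_cong, simp)
    subgoal for r
      apply (cases r)
      apply (simp_all add: bind_assoc_pmf bind_return_pmf split_beta bS)
      apply (subst bind_commute_pmf)
      apply (rule bind_pmf_cong, simp)
      apply (subst bind_commute_pmf)
      apply (simp add: ac_simps)
      done
    done
qed

lemma W_mgf:
  assumes p: "0 \<le> p" "p \<le> 1" and s: "0 \<le> s"
  shows "measure_pmf.expectation (W p xs) (\<lambda>w. exp (- s * real (snd w))) = (1 - p + p * exp (-s)) ^ length xs"
proof (induction xs)
  case Nil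
  then show ?case by simp
next
  case (Cons x xs)
  have b: "exp (- s * real (snd w)) \<le> 1" for w using s by (simp add: mult_nonneg_nonneg)
  have "measure_pmf.expectation (W p (x # xs)) (\<lambda>w. exp (- s * real (snd w))) =
     measure_pmf.expectation (bernoulli_pmf p) (\<lambda>r. measure_pmf.expectation 
        (map_pmf (\<lambda>(c, b). if r then (c, Suc b) else (c + of_bool x, b)) (W p xs)) (\<lambda>w. exp (- s * real (snd w))))"
    by (simp only: W.simps, rule integral_bind_pmf_real[where B=1]) (use b in auto)
  also have "\<dots> = p * measure_pmf.expectation (W p xs) (\<lambda>w. exp (-s) * exp (- s * real (snd w)))
       + (1 - p) * measure_pmf.expectation (W p xs) (\<lambda>w. exp (- s * real (snd w)))"
    using p by (simp add: split_beta algebra_simps flip: exp_add)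
  also have "\<dots> = (1 - p + p * exp (-s)) ^ length (x # xs)"
    using Cons by (simp add: algebra_simps)
  finally show ?case .
qed

lemma W_tail:
  assumes p: "0 \<le> p" "p \<le> 1" and s: "0 \<le> s"
  shows "measure_pmf.prob (W p xs) {w. real (snd w) < a} \<le> exp (s * a) * (1 - p + p * exp (-s)) ^ length xs"
proof -
  have "measure_pmf.prob (W p xs) {w. real (snd w) < a} = measure_pmf.expectation (W p xs) (indicator {w. real (snd w) < a})"
    by simp
  also have "\<dots> \<le> measure_pmf.expectation (W p xs) (\<lambda>w. exp (s * a) * exp (- s * real (snd w)))"
  proof (rule integral_mono)
    show "integrable (measure_pmf (W p xs)) (\<lambda>w. exp (s * a) * exp (- s * real (snd w)))"
      by (rule measure_pmf.integrable_const_bound[where B="exp (s*a)"]) (use s in \<open>auto simp: mult_nonneg_nonneg\<close>)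
    fix w
    show "indicator {w. real (snd w) < a} w \<le> exp (s * a) * exp (- s * real (snd w))"
    proof (cases "real (snd w) < a")
      case True
      then have "0 \<le> s * a + (- s * real (snd w))" using s mult_left_mono[of "real (snd w)" a s] by (simp add: algebra_simps)
      then have "1 \<le> exp (s * a + (- s * real (snd w)))" by simp
      then show ?thesis using True by (simp add: exp_add[symmetric])
    qed simp
  qed (auto intro!: measure_pmf.integrable_const_bound[where B=1] split: split_indicator)
  also have "\<dots> = exp (s * a) * (1 - p + p * exp (-s)) ^ length xs"
    using W_mgf[OF p s] by simp
  finally show ?thesis .
qed



abbreviation "Bh b \<equiv> binomial_pmf b (1/2::real)"

lemma EB: "measure_pmf.expectation (Bh b) (f :: nat \<Rightarrow> real) = (\<Sum>k\<le>b. f k * pmf (Bh b) k)"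
  by (rule integral_measure_pmf_real) (auto simp: set_pmf_binomial_eq)

lemma beta_formula:
  assumes "k \<le> b"
  shows "pmf (Bh b) k = real (b choose k) * (1/2)^b"
proof -
  have "(1/2::real)^k * (1/2)^(b-k) = (1/2)^(k + (b-k))" by (simp add: power_add)
  also have "k + (b - k) = b" using assms by simp
  finally show ?thesis by simp
qed

lemma beta_ratio:
  assumes "k < b"
  shows "pmf (Bh b) k * real (b - k) = pmf (Bh b) (Suc k) * real (Suc k)"
proof -
  have "(b - k) * (b choose k) = Suc k * (b choose Suc k)"
    by (metis binomial_absorb_comp binomial_absorption)
  hence e: "real (b - k) * real (b choose k) = real (Suc k) * real (b choose Suc k)"
    by (metis of_nat_mult)
  have a1: "pmf (Bh b) k = real (b choose k) * (1/2)^b" using assms by (intro beta_formula) simp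
  have a2: "pmf (Bh b) (Suc k) = real (b choose Suc k) * (1/2)^b" using assms by (intro beta_formula) simp
  show ?thesis unfolding a1 a2 by (metis e mult.commute mult.left_commute)
qed

lemma beta_zero: "b < k \<Longrightarrow> pmf (Bh b) k = 0"
  by simp

lemma tail_ge:
  assumes "0 < b" "0 \<le> t"
  shows "(\<Sum>k\<le>b. if real b / 2 + t \<le> real k then pmf (Bh b) k else 0) \<le> exp (- 2 * t\<^sup>2 / real b)"
proof -
  have "(\<Sum>k\<le>b. if real b / 2 + t \<le> real k then pmf (Bh b) k else 0) =
        measure_pmf.expectation (Bh b) (indicator {x. real b * (1/2) + t \<le> real x})"
    unfolding EB by (intro sum.cong) (auto simp: indicator_def)
  also have "\<dots> = measure_pmf.prob (Bh b) {x. real b * (1/2) + t \<le> real x}"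
    by simp
  also have "\<dots> \<le> exp (- 2 * t\<^sup>2 / real b)"
    by (rule binomial_distribution.prob_ge) (use assms in \<open>auto simp: binomial_distribution_def\<close>)
  finally show ?thesis .
qed

lemma tail_le:
  assumes "0 < b" "0 \<le> t"
  shows "(\<Sum>k\<le>b. if real k \<le> real b / 2 - t then pmf (Bh b) k else 0) \<le> exp (- 2 * t\<^sup>2 / real b)"
proof -
  have "(\<Sum>k\<le>b. if real k \<le> real b / 2 - t then pmf (Bh b) k else 0) =
        measure_pmf.expectation (Bh b) (indicator {x. real x \<le> real b * (1/2) - t})"
    unfolding EB by (intro sum.cong) (auto simp: indicator_def)
  also have "\<dots> = measure_pmf.prob (Bh b) {x. real x \<le> real b * (1/2) - t}"
    by simp
  also have "\<dots> \<le> exp (- 2 * t\<^sup>2 / real b)"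
    by (rule binomial_distribution.prob_le) (use assms in \<open>auto simp: binomial_distribution_def\<close>)
  finally show ?thesis .
qed

lemma shift_dp1:
  fixes b :: nat and h :: "nat \<Rightarrow> real" and t e0 :: real
  assumes h: "\<And>k. 0 \<le> h k" "\<And>k. h k \<le> 1" and b: "0 < b" and t: "0 \<le> t" "2 * t < real b"
    and cond: "real b / 2 + t + 1 \<le> exp e0 * (real b / 2 - t)"
  shows "measure_pmf.expectation (Bh b) (\<lambda>u. h (Suc u)) \<le> exp e0 * measure_pmf.expectation (Bh b) h + exp (- 2 * t\<^sup>2 / real b)"
proof -
  define \<beta> where "\<beta> k = pmf (Bh b) k" for k
  have pt: "h (Suc k) * \<beta> k \<le> exp e0 * (h (Suc k) * \<beta> (Suc k)) + (if real b / 2 + t \<le> real k then \<beta> k else 0)"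
    if "k \<le> b" for k
  proof (cases "real b / 2 + t \<le> real k")
    case True
    have "h (Suc k) * \<beta> k \<le> \<beta> k" using h[of "Suc k"] by (simp add: \<beta>_def mult_left_le_one_le)
    moreover have "0 \<le> exp e0 * (h (Suc k) * \<beta> (Suc k))" using h by (simp add: \<beta>_def)
    ultimately show ?thesis using True by simp
  next
    case False
    hence kb: "k < b" using t by linarith
    have "real (Suc k) \<le> exp e0 * real (b - k)"
    proof -
      have "real (Suc k) \<le> real b / 2 + t + 1" using False by simp
      also have "\<dots> \<le> exp e0 * (real b / 2 - t)" by (rule cond)
      also have "\<dots> \<le> exp e0 * real (b - k)" using False kb by (intro mult_left_mono) auto
      finally show ?thesis .
    qed
    hence "\<beta> k * real (Suc k) \<le> \<beta> k * (exp e0 * real (b - k))"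
      by (intro mult_left_mono) (auto simp: \<beta>_def simp del: of_nat_diff)
    also have "\<dots> = exp e0 * (\<beta> (Suc k) * real (Suc k))"
      using beta_ratio[OF kb] by (simp add: \<beta>_def)
    finally have "\<beta> k \<le> exp e0 * \<beta> (Suc k)"
      by (simp add: mult.assoc[symmetric] del: of_nat_Suc)
    hence "h (Suc k) * \<beta> k \<le> h (Suc k) * (exp e0 * \<beta> (Suc k))"
      using h by (intro mult_left_mono) auto
    then show ?thesis using False by (simp add: algebra_simps)
  qed
  have "measure_pmf.expectation (Bh b) (\<lambda>u. h (Suc u)) = (\<Sum>k\<le>b. h (Suc k) * \<beta> k)"
    by (simp add: EB \<beta>_def)
  also have "\<dots> \<le> (\<Sum>k\<le>b. exp e0 * (h (Suc k) * \<beta> (Suc k)) + (if real b / 2 + t \<le> real k then \<beta> k else 0))"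
    by (intro sum_mono pt) auto
  also have "\<dots> = exp e0 * (\<Sum>k\<le>b. h (Suc k) * \<beta> (Suc k)) + (\<Sum>k\<le>b. if real b / 2 + t \<le> real k then \<beta> k else 0)"
    by (simp add: sum.distrib sum_distrib_left)
  also have "(\<Sum>k\<le>b. h (Suc k) * \<beta> (Suc k)) \<le> (\<Sum>k\<le>b. h k * \<beta> k)"
  proof -
    have "(\<Sum>k\<le>Suc b. h k * \<beta> k) = h 0 * \<beta> 0 + (\<Sum>k\<le>b. h (Suc k) * \<beta> (Suc k))"
      by (rule sum.atMost_Suc_shift)
    moreover have "(\<Sum>k\<le>Suc b. h k * \<beta> k) = (\<Sum>k\<le>b. h k * \<beta> k)"
      by (simp add: \<beta>_def)
    moreover have "0 \<le> h 0 * \<beta> 0" using h by (simp add: \<beta>_def)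
    ultimately show ?thesis by linarith
  qed
  also have "(\<Sum>k\<le>b. h k * \<beta> k) = measure_pmf.expectation (Bh b) h"
    by (simp add: EB \<beta>_def)
  also have "(\<Sum>k\<le>b. if real b / 2 + t \<le> real k then \<beta> k else 0) \<le> exp (- 2 * t\<^sup>2 / real b)"
    unfolding \<beta>_def by (rule tail_ge[OF b t(1)])
  finally show ?thesis by simp
qed

lemma shift_dp2:
  fixes b :: nat and h :: "nat \<Rightarrow> real" and t e0 :: real
  assumes h: "\<And>k. 0 \<le> h k" "\<And>k. h k \<le> 1" and b: "0 < b" and t: "0 \<le> t" "2 * t < real b"
    and cond: "real b / 2 + t + 1 \<le> exp e0 * (real b / 2 - t)"
  shows "measure_pmf.expectation (Bh b) h \<le> exp e0 * measure_pmf.expectation (Bh b) (\<lambda>u. h (Suc u)) + exp (- 2 * t\<^sup>2 / real b)"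
proof -
  define \<beta> where "\<beta> k = pmf (Bh b) k" for k
  obtain m where m: "b = Suc m" using b by (cases b) auto
  have pt: "h (Suc j) * \<beta> (Suc j) \<le> exp e0 * (h (Suc j) * \<beta> j) + (if real (Suc j) \<le> real b / 2 - t then \<beta> (Suc j) else 0)"
    if "j \<le> m" for j
  proof (cases "real (Suc j) \<le> real b / 2 - t")
    case True
    have "h (Suc j) * \<beta> (Suc j) \<le> \<beta> (Suc j)" using h[of "Suc j"] by (simp add: \<beta>_def mult_left_le_one_le)
    moreover have "0 \<le> exp e0 * (h (Suc j) * \<beta> j)" using h by (simp add: \<beta>_def)
    ultimately show ?thesis using True by simp
  next
    case False
    have jb: "j < b" using that m by simp
    have "real (b - j) \<le> exp e0 * real (Suc j)"
    proof -
      have "real (b - j) \<le> real b / 2 + t + 1" using False jb by (simp add: of_nat_diff)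
      also have "\<dots> \<le> exp e0 * (real b / 2 - t)" by (rule cond)
      also have "\<dots> \<le> exp e0 * real (Suc j)" using False by (intro mult_left_mono) auto
      finally show ?thesis .
    qed
    hence "\<beta> j * real (b - j) \<le> \<beta> j * (exp e0 * real (Suc j))"
      by (intro mult_left_mono) (auto simp: \<beta>_def simp del: of_nat_diff of_nat_Suc)
    moreover have r: "\<beta> j * real (b - j) = \<beta> (Suc j) * real (Suc j)"
      using beta_ratio[OF jb] by (simp only: \<beta>_def)
    ultimately have "\<beta> (Suc j) * real (Suc j) \<le> (exp e0 * \<beta> j) * real (Suc j)"
      by (simp only: ac_simps)
    hence "\<beta> (Suc j) \<le> exp e0 * \<beta> j"
      by (rule mult_right_le_imp_le) simp
    hence "h (Suc j) * \<beta> (Suc j) \<le> h (Suc j) * (exp e0 * \<beta> j)"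
      using h by (intro mult_left_mono) auto
    then show ?thesis using False by (simp add: algebra_simps)
  qed
  have z: "h 0 * \<beta> 0 \<le> \<beta> 0" using h[of 0] by (simp add: \<beta>_def mult_left_le_one_le)
  have "measure_pmf.expectation (Bh b) h = (\<Sum>k\<le>Suc m. h k * \<beta> k)"
    by (simp add: EB \<beta>_def m)
  also have "\<dots> = h 0 * \<beta> 0 + (\<Sum>j\<le>m. h (Suc j) * \<beta> (Suc j))"
    by (rule sum.atMost_Suc_shift)
  also have "\<dots> \<le> \<beta> 0 + (\<Sum>j\<le>m. exp e0 * (h (Suc j) * \<beta> j) + (if real (Suc j) \<le> real b / 2 - t then \<beta> (Suc j) else 0))"
    by (intro add_mono z sum_mono pt) auto
  also have "\<dots> = exp e0 * (\<Sum>j\<le>m. h (Suc j) * \<beta> j) + (\<beta> 0 + (\<Sum>j\<le>m. if real (Suc j) \<le> real b / 2 - t then \<beta> (Suc j) else 0))"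
    by (simp add: sum.distrib sum_distrib_left)
  also have "\<beta> 0 + (\<Sum>j\<le>m. if real (Suc j) \<le> real b / 2 - t then \<beta> (Suc j) else 0) = 
     (\<Sum>k\<le>Suc m. if real k \<le> real b / 2 - t then \<beta> k else 0)"
    using t by (subst sum.atMost_Suc_shift) simp
  also have "\<dots> \<le> exp (- 2 * t\<^sup>2 / real b)"
    unfolding \<beta>_def m[symmetric] by (rule tail_le[OF b t(1)])
  also have "(\<Sum>j\<le>m. h (Suc j) * \<beta> j) \<le> (\<Sum>j\<le>b. h (Suc j) * \<beta> j)"
    unfolding m using h by (simp add: \<beta>_def)
  also have "(\<Sum>j\<le>b. h (Suc j) * \<beta> j) = measure_pmf.expectation (Bh b) (\<lambda>u. h (Suc u))"
    by (simp add: EB \<beta>_def)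
  finally show ?thesis by simp
qed



lemma key_exp_ineq:
  fixes q x :: real
  assumes q: "0 \<le> q" "q \<le> 1/2" and x: "0 \<le> x"
  shows "(1 - q) * exp x + q \<le> exp ((1 - 2*q) * x) * (q * exp x + (1 - q))"
proof -
  define \<psi> where "\<psi> y = (1 - 2*q) * y + ln (q * exp y + (1 - q)) - ln ((1 - q) * exp y + q)" for y
  have pos1: "0 < q * exp y + (1 - q)" for y by (rule add_nonneg_pos) (use q in auto)
  have pos2: "0 < (1 - q) * exp y + q" for y by (rule add_pos_nonneg) (use q in auto)
  have der: "(\<psi> has_real_derivative ((1 - 2*q) + q * exp y / (q * exp y + (1 - q)) - (1 - q) * exp y / ((1 - q) * exp y + q))) (at y)" for y
    unfolding \<psi>_def
    apply (rule derivative_eq_intros refl | simp add: pos1 pos2)+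
    apply (simp add: ac_simps)
    done
  have dnn: "0 \<le> (1 - 2*q) + q * exp y / (q * exp y + (1 - q)) - (1 - q) * exp y / ((1 - q) * exp y + q)" for y
  proof -
    define u where "u = exp y"
    have u: "0 < u" by (simp add: u_def)
    define D where "D = (q * u + (1 - q)) * ((1 - q) * u + q)"
    have D: "0 < D" using pos1[of y] pos2[of y] by (simp add: D_def u_def)
    have "q * u / (q * u + (1 - q)) - (1 - q) * u / ((1 - q) * u + q) = - (1 - 2*q) * u / D"
      using pos1[of y] pos2[of y] by (simp add: D_def u_def field_simps)
    also have "\<dots> = - ((1 - 2*q) * u / D)" by (simp only: mult_minus_left minus_divide_left)
    moreover have "u \<le> D"
    proof -
      have "D - u = q * (1 - q) * (u - 1)^2" by (simp add: D_def power2_eq_square algebra_simps)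
      also have "\<dots> \<ge> 0" using q by simp
      finally show ?thesis by simp
    qed
    hence "(1 - 2*q) * u / D \<le> (1 - 2*q)" using D u q by (simp add: divide_le_eq mult_left_mono)
    ultimately show ?thesis unfolding u_def[symmetric] by linarith
  qed
  have "\<psi> 0 \<le> \<psi> x"
    by (rule DERIV_nonneg_imp_nondecreasing[OF x]) (use der dnn in blast)
  moreover have "\<psi> 0 = 0" by (simp add: \<psi>_def)
  ultimately have "ln ((1 - q) * exp x + q) \<le> (1 - 2*q) * x + ln (q * exp x + (1 - q))"
    by (simp add: \<psi>_def)
  hence "exp (ln ((1 - q) * exp x + q)) \<le> exp ((1 - 2*q) * x + ln (q * exp x + (1 - q)))"
    by simp
  thus ?thesis using pos1[of x] pos2[of x] by (simp add: exp_add)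
qed

lemma scalar_comb:
  fixes q A B E K \<eta> :: real
  assumes q: "0 \<le> q" "q \<le> 1/2" and AB: "0 \<le> A" "0 \<le> B" and E: "1 \<le> E" and eta: "0 \<le> \<eta>"
    and key: "(1 - q) * K + q \<le> E * (q * K + (1 - q))"
    and dp: "A \<le> K * B + \<eta>"
  shows "(1 - q) * A + q * B \<le> E * (q * A + (1 - q) * B) + \<eta>"
proof (cases "1 - q - E * q \<le> 0")
  case True
  have h1: "1 - q \<le> E * (1 - q)" using mult_right_mono[of 1 E "1-q"] q E by simp
  have "q - E * (1 - q) \<le> 0" using h1 q by linarith
  hence "(q - E * (1 - q)) * B \<le> 0" using AB by (simp add: mult_nonpos_nonneg)
  moreover have "(1 - q - E * q) * A \<le> 0" using True AB by (simp add: mult_nonpos_nonneg)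
  ultimately show ?thesis using eta by (simp add: algebra_simps)
next
  case False
  have c: "0 \<le> 1 - q - E * q" using False by simp
  have "0 \<le> E * q" using q E by simp
  hence c1: "1 - q - E * q \<le> 1" using q by linarith
  have "(1 - q - E * q) * A \<le> (1 - q - E * q) * (K * B + \<eta>)"
    using dp c by (rule mult_left_mono)
  moreover have "((1 - q) * K + q - E * (q * K + (1 - q))) * B \<le> 0"
    using key AB by (simp add: mult_nonpos_nonneg)
  moreover have "(1 - q - E * q) * \<eta> \<le> \<eta>" by (rule mult_left_le_one_le[OF eta c c1])
  ultimately show ?thesis by (simp add: algebra_simps)
qed

lemma shuffle_perm:
  assumes p: "p permutes {..<length ys}"
  shows "shuffle (permute_list p ys) = shuffle ys"
proof -
  define S where "S = {\<sigma>. \<sigma> permutes {..<length ys}}"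
  have fin: "finite S" unfolding S_def by (rule finite_permutations) simp
  have ne: "S \<noteq> {}" unfolding S_def using permutes_id by blast
  have "shuffle (permute_list p ys) = map_pmf (\<lambda>\<sigma>. map (\<lambda>i. permute_list p ys ! \<sigma> i) [0..<length (permute_list p ys)]) (pmf_of_set S)"
    by (simp add: shuffle_def S_def)
  also have "\<dots> = map_pmf (\<lambda>\<sigma>. map (\<lambda>i. ys ! (p \<circ> \<sigma>) i) [0..<length ys]) (pmf_of_set S)"
  proof (intro map_pmf_cong refl)
    fix \<sigma> assume "\<sigma> \<in> set_pmf (pmf_of_set S)"
    hence s: "\<sigma> permutes {..<length ys}" using fin ne by (simp add: S_def)
    show "map (\<lambda>i. permute_list p ys ! \<sigma> i) [0..<length (permute_list p ys)] = map (\<lambda>i. ys ! (p \<circ> \<sigma>) i) [0..<length ys]"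
    proof (rule map_cong)
      show "[0..<length (permute_list p ys)] = [0..<length ys]" by simp
      fix i assume "i \<in> set [0..<length ys]"
      hence "\<sigma> i < length ys" using permutes_in_image[OF s, of i] by simp
      thus "permute_list p ys ! \<sigma> i = ys ! (p \<circ> \<sigma>) i" using permute_list_nth[OF p] by simp
    qed
  qed
  also have "\<dots> = map_pmf (\<lambda>\<tau>. map (\<lambda>i. ys ! \<tau> i) [0..<length ys]) (map_pmf ((\<circ>) p) (pmf_of_set S))"
    by (simp add: pmf.map_comp o_def)
  also have "map_pmf ((\<circ>) p) (pmf_of_set S) = pmf_of_set ((\<circ>) p ` S)"
  proof (rule map_pmf_of_set_inj[OF _ ne fin])
    show "inj_on ((\<circ>) p) S"
    proof (rule inj_onI)
      fix \<sigma> \<tau> assume "p \<circ> \<sigma> = p \<circ> \<tau>"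
      hence "\<forall>x. p (\<sigma> x) = p (\<tau> x)" by (simp add: fun_eq_iff)
      thus "\<sigma> = \<tau>" using permutes_inj[OF p] by (simp add: fun_eq_iff inj_eq)
    qed
  qed
  also have "(\<circ>) p ` S = S"
  proof
    show "(\<circ>) p ` S \<subseteq> S"
    proof
      fix \<tau> assume "\<tau> \<in> (\<circ>) p ` S"
      then obtain \<sigma> where "\<sigma> \<in> S" "\<tau> = p \<circ> \<sigma>" by blast
      thus "\<tau> \<in> S" using permutes_compose[of \<sigma> "{..<length ys}" p] p by (simp add: S_def)
    qed
    show "S \<subseteq> (\<circ>) p ` S"
    proof
      fix \<sigma> assume s: "\<sigma> \<in> S"
      have "inv p \<circ> \<sigma> \<in> S" using s permutes_compose[of \<sigma> "{..<length ys}" "inv p"] permutes_inv[OF p]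
        by (simp add: S_def)
      moreover have "\<sigma> = p \<circ> (inv p \<circ> \<sigma>)" using permutes_inverses(1)[OF p] by (simp add: fun_eq_iff)
      ultimately show "\<sigma> \<in> (\<circ>) p ` S" by blast
    qed
  qed
  finally show ?thesis by (simp add: shuffle_def S_def)
qed

definition canon :: "nat \<Rightarrow> nat \<Rightarrow> bool list" where
  "canon n k = replicate k True @ replicate (n - k) False"

lemma shuffle_canon:
  assumes "length ys = n"
  shows "shuffle ys = shuffle (canon n (cnt ys))"
proof -
  have "mset ys = mset (canon n (cnt ys))"
  proof (rule multiset_eqI)
    fix v :: bool
    have l: "length (filter id ys) + length (filter (\<lambda>x. \<not> id x) ys) = length ys"
      by (rule sum_length_filter_compl)
    have f1: "filter ((=) True) ys = filter id ys" by (rule filter_cong) auto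
    have f2: "filter ((=) False) ys = filter (\<lambda>x. \<not> id x) ys" by (rule filter_cong) auto
    have c1: "count (mset ys) True = cnt ys" by (induction ys) (auto simp: cnt_def)
    have c2': "count (mset ys) False = length ys - cnt ys"
      by (induction ys) (auto simp: cnt_def Suc_diff_le length_filter_le)
    have c2: "count (mset ys) False = n - cnt ys" using c2' assms by simp
    have c3: "count (mset (canon n (cnt ys))) True = cnt ys" by (simp add: canon_def)
    have c4: "count (mset (canon n (cnt ys))) False = n - cnt ys" by (simp add: canon_def)
    show "count (mset ys) v = count (mset (canon n (cnt ys))) v"
      by (cases v) (simp_all only: c1 c2 c3 c4)
  qed
  then obtain p where p: "p permutes {..<length (canon n (cnt ys))}" "permute_list p (canon n (cnt ys)) = ys"
    by (rule mset_eq_permutation)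
  show ?thesis using shuffle_perm[OF p(1)] p(2) by simp
qed

lemma prob_bitsum:
  assumes "length X = n"
  shows "measure_pmf.prob (shuffled_bitsum n lam X) T =
         measure_pmf.expectation (C n lam X) (\<lambda>k. measure_pmf.prob (shuffle (canon n k)) T)"
proof -
  have "measure_pmf.prob (shuffled_bitsum n lam X) T = measure_pmf.expectation (shuffled_bitsum n lam X) (indicator T)"
    by simp
  also have "\<dots> = measure_pmf.expectation (local_msgs n lam X) (\<lambda>ys. measure_pmf.expectation (shuffle ys) (indicator T))"
    unfolding shuffled_bitsum_def by (rule integral_bind_pmf_real[where B=1]) (auto split: split_indicator)
  also have "\<dots> = measure_pmf.expectation (local_msgs n lam X) (\<lambda>ys. measure_pmf.prob (shuffle (canon n (cnt ys))) T)"
    by (intro integral_cong_AE) (auto simp: AE_measure_pmf_iff length_local assms shuffle_canon[symmetric])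
  also have "\<dots> = measure_pmf.expectation (C n lam X) (\<lambda>k. measure_pmf.prob (shuffle (canon n k)) T)"
    by (simp add: C_def)
  finally show ?thesis .
qed


lemma exp_quad_lower:
  fixes x :: real assumes "0 \<le> x"
  shows "1 + x + x\<^sup>2 / 2 \<le> exp x"
proof -
  define \<phi> where "\<phi> y = exp y - 1 - y - y\<^sup>2 / 2" for y :: real
  have "\<phi> 0 \<le> \<phi> x"
  proof (rule DERIV_nonneg_imp_nondecreasing[OF assms])
    fix y assume "0 \<le> y" "y \<le> x"
    have "(\<phi> has_real_derivative (exp y - 1 - y)) (at y)"
      unfolding \<phi>_def by (auto intro!: derivative_eq_intros simp: power2_eq_square)
    moreover have "0 \<le> exp y - 1 - y" using exp_ge_add_one_self[of y] by linarith
    ultimately show "\<exists>d. (\<phi> has_real_derivative d) (at y) \<and> 0 \<le> d" by blast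
  qed
  thus ?thesis by (simp add: \<phi>_def)
qed

lemma exp_neg_quad_upper:
  fixes x :: real assumes "0 \<le> x"
  shows "exp (- x) \<le> 1 - x + x\<^sup>2 / 2"
proof -
  define \<phi> where "\<phi> y = 1 - y + y\<^sup>2 / 2 - exp (- y)" for y :: real
  have "\<phi> 0 \<le> \<phi> x"
  proof (rule DERIV_nonneg_imp_nondecreasing[OF assms])
    fix y assume "0 \<le> y" "y \<le> x"
    have "(\<phi> has_real_derivative (- 1 + y + exp (- y))) (at y)"
      unfolding \<phi>_def by (auto intro!: derivative_eq_intros simp: power2_eq_square)
    moreover have "0 \<le> - 1 + y + exp (- y)" using exp_ge_add_one_self[of "-y"] by linarith
    ultimately show "\<exists>d. (\<phi> has_real_derivative d) (at y) \<and> 0 \<le> d" by blast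
  qed
  thus ?thesis by (simp add: \<phi>_def)
qed

lemma exp_le_inv_one_minus:
  fixes s :: real assumes "s < 1"
  shows "exp s \<le> 1 / (1 - s)"
proof -
  have "1 - s \<le> exp (- s)" using exp_ge_add_one_self[of "-s"] by simp
  hence "1 / exp (- s) \<le> 1 / (1 - s)" using assms by (intro divide_left_mono) auto
  thus ?thesis by (simp add: exp_minus divide_inverse)
qed

lemma ln8_ge2: "2 \<le> ln (8::real)"
proof -
  have "exp (2::real) = exp 1 * exp 1" by (simp flip: exp_add)
  also have "\<dots> \<le> (272/100) * (272/100)"
    using e_less_272 by (intro mult_mono) auto
  also have "\<dots> \<le> 8" by simp
  finally have "exp (2::real) \<le> 8" .
  hence "ln (exp (2::real)) \<le> ln 8" by (subst ln_le_cancel_iff) auto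
  thus ?thesis by simp
qed

context
  fixes \<delta> lam :: real
  assumes \<delta>: "0 < \<delta>" "\<delta> < 1" and lam: "14 * ln (4 / \<delta>) \<le> lam"
begin

definition "LL = ln (4 / \<delta>)"
definition "L2 = ln (2 / \<delta>)"
definition "L8 = ln (8 / \<delta>)"
definition "aa = lam - sqrt (2 * lam * L2)"
definition "e0 = sqrt (32 * LL / aa)"

lemma logs: "L2 = LL - ln 2" "L8 = LL + ln 2" "2 * ln 2 \<le> LL" "0 < ln (2::real)" "0 < L2" "L2 \<le> LL" "2 \<le> L8"
    "L8 \<le> 3/2 * LL" "0 < LL"
proof -
  have l4: "ln (4::real) = 2 * ln 2" using ln_realpow[of 2 2] by simp
  have l8: "ln (8::real) = 3 * ln 2" using ln_realpow[of 2 3] by simp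
  show a: "L2 = LL - ln 2" using \<delta> by (simp add: L2_def LL_def ln_div l4)
  show b: "L8 = LL + ln 2" using \<delta> by (simp add: L8_def LL_def ln_div l4 l8)
  have "ln \<delta> < 0" using \<delta> by simp
  thus c: "2 * ln 2 \<le> LL" using \<delta> by (simp add: LL_def ln_div l4)
  show d: "0 < ln (2::real)" by simp
  show "0 < L2" using c d a by linarith
  show "L2 \<le> LL" using a d by linarith
  have "ln 8 \<le> L8" using \<delta> \<open>ln \<delta> < 0\<close> by (simp add: L8_def ln_div)
  thus "2 \<le> L8" using ln8_ge2 by linarith
  show "L8 \<le> 3/2 * LL" using b c by linarith
  show "0 < LL" using c d by linarith
qed

lemma lam_pos: "0 < lam" using lam logs(9) by (simp add: LL_def)

lemma aa_props: "0 < aa" "aa \<le> lam" "8 * LL \<le> aa"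
proof -
  have l: "14 * LL \<le> lam" using lam by (simp add: LL_def)
  have "2 * lam * L2 \<le> 2 * lam * LL" using logs lam_pos by simp
  also have "\<dots> \<le> 2 * lam * (lam / 14)" using l lam_pos by (intro mult_left_mono) auto
  also have "\<dots> \<le> (3/7 * lam)\<^sup>2" using lam_pos by (simp add: power2_eq_square)
  finally have "sqrt (2 * lam * L2) \<le> sqrt ((3/7 * lam)\<^sup>2)" by (rule real_sqrt_le_mono)
  also have "\<dots> = 3/7 * lam" using lam_pos by simp
  finally have "sqrt (2 * lam * L2) \<le> 3/7 * lam" .
  thus "8 * LL \<le> aa" using l by (simp add: aa_def)
  thus "0 < aa" using logs(9) by linarith
  show "aa \<le> lam" using lam_pos logs(5) by (simp add: aa_def)
qed

lemma e0_nonneg: "0 \<le> e0" using aa_props(1) logs(9) by (simp add: e0_def)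


lemma cond_lemma:
  fixes b :: real assumes b: "aa \<le> b"
  defines "y \<equiv> sqrt (2 * L8 / b)"
  defines "t \<equiv> y * b / 2"
  shows "0 \<le> t" "2 * t < b" "b / 2 + t + 1 \<le> exp e0 * (b / 2 - t)" "exp (- 2 * t\<^sup>2 / b) = \<delta> / 8"
proof -
  have bpos: "0 < b" using aa_props(1) b by linarith
  have L8pos: "0 < L8" using logs(7) by linarith
  have y0: "0 \<le> y" unfolding y_def using bpos L8pos by simp
  have y2: "y\<^sup>2 = 2 * L8 / b" unfolding y_def using bpos L8pos by simp
  have LLb: "8 * LL \<le> b" using aa_props(3) b by linarith
  have "2 * L8 / b \<le> 3 * LL / b" using logs(8) bpos by (intro divide_right_mono) auto
  also have "\<dots> \<le> 3 / 8" using LLb bpos by (simp add: divide_le_eq)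
  finally have y2le: "y\<^sup>2 \<le> 3/8" using y2 by simp
  have y1: "y < 1"
  proof (rule power2_less_imp_less)
    show "y\<^sup>2 < 1\<^sup>2" using y2le by simp
  qed simp
  show "0 \<le> t" unfolding t_def using y0 bpos by simp
  show "2 * t < b" unfolding t_def using y1 bpos by simp
  have "(13/4 * y)\<^sup>2 = 169/16 * y\<^sup>2" by (simp add: power2_eq_square algebra_simps)
  also have "\<dots> = 169/8 * L8 / b" unfolding y2 by simp
  also have "\<dots> \<le> 169/8 * (3/2 * LL) / b" using logs(8) bpos by (intro divide_right_mono) auto
  also have "\<dots> \<le> 32 * LL / b" using logs(9) bpos by (intro divide_right_mono) auto
  also have "\<dots> \<le> 32 * LL / aa" using aa_props(1) b logs(9) by (intro divide_left_mono) auto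
  finally have "sqrt ((13/4 * y)\<^sup>2) \<le> e0" unfolding e0_def by (rule real_sqrt_le_mono)
  hence ey: "13/4 * y \<le> e0" using y0 by simp
  have "1 + 13/4 * y + (13/4 * y)\<^sup>2 / 2 \<le> 1 + e0 + e0\<^sup>2 / 2"
  proof -
    have "(13/4*y)\<^sup>2 \<le> e0\<^sup>2" using ey y0 by (intro power_mono) auto
    thus ?thesis using ey by linarith
  qed
  also have "\<dots> \<le> exp e0" by (rule exp_quad_lower[OF e0_nonneg])
  finally have ex0: "1 + 13/4*y + (13/4*y)\<^sup>2/2 \<le> exp e0" .
  have "(13/4*y)\<^sup>2/2 = 169/32*y\<^sup>2" by (simp add: power2_eq_square)
  hence ex: "1 + 13/4 * y + 169/32 * y\<^sup>2 \<le> exp e0" using ex0 by linarith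
  have poly: "(1 + 13/4 * y + 169/32 * y\<^sup>2) * (1 - y) - (1 + y + y\<^sup>2 / 2) = y * (5/4 + 49/32 * y - 169/32 * y\<^sup>2)"
    by (simp add: power2_eq_square field_simps)
  have y58: "y \<le> 5/8"
  proof (rule power2_le_imp_le)
    show "y\<^sup>2 \<le> (5/8)\<^sup>2" using y2le by (simp add: power2_eq_square)
  qed simp
  have f1: "(y - 5/8) * (169 * y + 453/8) \<le> 0" using y58 y0 by (intro mult_nonpos_nonneg) auto
  have f2: "169 * y\<^sup>2 - 49 * y - 40 = (y - 5/8) * (169 * y + 453/8) - 295/64"
    by (simp add: power2_eq_square field_simps)
  have "0 \<le> 5/4 + 49/32 * y - 169/32 * y\<^sup>2" using f1 f2 by linarith
  hence "0 \<le> y * (5/4 + 49/32 * y - 169/32 * y\<^sup>2)" using y0 by simp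
  hence p1: "1 + y + y\<^sup>2 / 2 \<le> (1 + 13/4 * y + 169/32 * y\<^sup>2) * (1 - y)" using poly by linarith
  also have "\<dots> \<le> exp e0 * (1 - y)" using ex y1 by (intro mult_right_mono) auto
  finally have p2: "1 + y + y\<^sup>2 / 2 \<le> exp e0 * (1 - y)" .
  have "2 / b = y\<^sup>2 / L8" using y2 L8pos by (simp add: field_simps)
  also have "\<dots> \<le> y\<^sup>2 / 2" using logs(7) by (intro divide_left_mono) auto
  finally have tb: "2 / b \<le> y\<^sup>2 / 2" .
  have "b / 2 + t + 1 = b / 2 * (1 + y + 2 / b)" unfolding t_def using bpos by (simp add: field_simps)
  also have "\<dots> \<le> b / 2 * (1 + y + y\<^sup>2 / 2)" using tb bpos by (intro mult_left_mono) auto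
  also have "\<dots> \<le> b / 2 * (exp e0 * (1 - y))" using p2 bpos by (intro mult_left_mono) auto
  also have "\<dots> = exp e0 * (b / 2 - t)" unfolding t_def by (simp add: algebra_simps)
  finally show "b / 2 + t + 1 \<le> exp e0 * (b / 2 - t)" .
  have "2 * t\<^sup>2 / b = y\<^sup>2 * b / 2" unfolding t_def using bpos by (simp add: power2_eq_square field_simps)
  also have "\<dots> = L8" unfolding y2 using bpos by simp
  finally have "2 * t\<^sup>2 / b = L8" .
  hence "exp (- 2 * t\<^sup>2 / b) = exp (- L8)" by simp
  also have "\<dots> = \<delta> / 8" using \<delta> by (simp add: L8_def exp_minus)
  finally show "exp (- 2 * t\<^sup>2 / b) = \<delta> / 8" .
qed

lemma chernoff_num:
  fixes n :: nat assumes n: "lam \<le> real n"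
  defines "p \<equiv> lam / real n"
  defines "s \<equiv> sqrt (2 * L2 / lam)"
  shows "0 \<le> s" "exp (s * aa) * (1 - p + p * exp (- s)) ^ (n - 1) \<le> 7/8 * \<delta>"
proof -
  have lp: "0 < lam" by (rule lam_pos)
  have npos: "0 < real n" using lp n by linarith
  have p0: "0 < p" "p \<le> 1" unfolding p_def using lp n npos by auto
  show s0: "0 \<le> s" unfolding s_def using lp logs(5) by simp
  have s2: "s\<^sup>2 = 2 * L2 / lam" unfolding s_def using lp logs(5) by simp
  have "1 - p + p * exp (- s) = 1 + p * (exp (- s) - 1)" by (simp add: algebra_simps)
  also have "\<dots> \<le> exp (p * (exp (- s) - 1))" by (rule exp_ge_add_one_self)
  finally have base: "1 - p + p * exp (- s) \<le> exp (p * (exp (- s) - 1))" .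
  have base0: "0 \<le> 1 - p + p * exp (- s)" using p0 by (simp add: add_nonneg_nonneg)
  have "(1 - p + p * exp (- s)) ^ (n - 1) \<le> exp (p * (exp (- s) - 1)) ^ (n - 1)"
    by (rule power_mono[OF base base0])
  also have "\<dots> = exp ((real (n - 1) * p) * (exp (- s) - 1))" by (simp add: exp_of_nat_mult[symmetric] mult.assoc)
  also have "real (n - 1) * p = lam - p" using npos unfolding p_def by (simp add: of_nat_diff field_simps)
  finally have pw: "(1 - p + p * exp (- s)) ^ (n - 1) \<le> exp ((lam - p) * (exp (- s) - 1))" .
  have sq: "s * sqrt (2 * lam * L2) = 2 * L2"
  proof -
    have "s * sqrt (2 * lam * L2) = sqrt (2 * L2 / lam * (2 * lam * L2))" unfolding s_def by (rule real_sqrt_mult[symmetric])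
    also have "2 * L2 / lam * (2 * lam * L2) = (2 * L2)\<^sup>2" using lp by (simp add: power2_eq_square field_simps)
    also have "sqrt \<dots> = 2 * L2" by (subst real_sqrt_abs) (use logs(5) in simp)
    finally show ?thesis .
  qed
  have ls2: "lam * s\<^sup>2 = 2 * L2" using s2 lp by simp
  have e1: "lam * (exp (- s) - 1) \<le> lam * (- s + s\<^sup>2 / 2)"
    using exp_neg_quad_upper[OF s0] lp by (intro mult_left_mono) auto
  have e2: "- p * (exp (- s) - 1) \<le> s"
  proof -
    have "0 \<le> 1 - exp (- s)" using s0 by simp
    hence "p * (1 - exp (- s)) \<le> 1 * (1 - exp (- s))" using p0 by (intro mult_right_mono) auto
    moreover have "1 - exp (- s) \<le> s" using exp_ge_add_one_self[of "-s"] by linarith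
    ultimately show ?thesis by (simp add: algebra_simps)
  qed
  have "s * aa + (lam - p) * (exp (- s) - 1) = s * lam - s * sqrt (2 * lam * L2) + lam * (exp (- s) - 1) - p * (exp (- s) - 1)"
    by (simp add: aa_def algebra_simps)
  also have "\<dots> \<le> s * lam - 2 * L2 + lam * (- s + s\<^sup>2 / 2) + s" using sq e1 e2 by linarith
  also have "\<dots> = - L2 + s" using ls2 by (simp add: algebra_simps)
  finally have ex: "s * aa + (lam - p) * (exp (- s) - 1) \<le> - L2 + s" .
  have "s\<^sup>2 \<le> (3/7)\<^sup>2"
  proof -
    have "s\<^sup>2 = 2 * L2 / lam" by (rule s2)
    also have "\<dots> \<le> 2 * LL / lam" using logs(6) lp by (intro divide_right_mono) auto
    also have "\<dots> \<le> 1 / 7" using lam lp by (simp add: LL_def divide_le_eq)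
    finally show ?thesis by (simp add: power2_eq_square)
  qed
  hence s37: "s \<le> 3/7" by (rule power2_le_imp_le) simp
  have "exp s \<le> 1 / (1 - s)" using s37 by (intro exp_le_inv_one_minus) simp
  also have "\<dots> \<le> 7/4" using s37 by (simp add: divide_le_eq)
  finally have es: "exp s \<le> 7/4" .
  have "exp (s * aa) * (1 - p + p * exp (- s)) ^ (n - 1) \<le> exp (s * aa) * exp ((lam - p) * (exp (- s) - 1))"
    using pw by (intro mult_left_mono) auto
  also have "\<dots> = exp (s * aa + (lam - p) * (exp (- s) - 1))" by (simp add: exp_add)
  also have "\<dots> \<le> exp (- L2 + s)" using ex by simp
  also have "\<dots> = \<delta> / 2 * exp s" by (simp only: exp_add) (use \<delta> in \<open>simp add: L2_def exp_minus inverse_eq_divide\<close>)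
  also have "\<dots> \<le> \<delta> / 2 * (7/4)" using es \<delta> by (intro mult_left_mono) auto
  finally show "exp (s * aa) * (1 - p + p * exp (- s)) ^ (n - 1) \<le> 7/8 * \<delta>" by simp
qed

end

lemma exp01:
  fixes f :: "'a \<Rightarrow> real"
  assumes "\<And>x. 0 \<le> f x" "\<And>x. f x \<le> 1"
  shows "0 \<le> measure_pmf.expectation M f" "measure_pmf.expectation M f \<le> 1"
proof -
  have i1: "integrable (measure_pmf M) f"
    by (rule measure_pmf.integrable_const_bound[where B=1]) (use assms in auto)
  show "0 \<le> measure_pmf.expectation M f" by (intro integral_nonneg_AE) (use assms in auto)
  show "measure_pmf.expectation M f \<le> 1"
    by (metis assms(2) measure_pmf.prob_space_axioms prob_space.integral_le_const i1 AE_I2)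
qed

lemma int01:
  fixes f :: "'a \<Rightarrow> real"
  assumes "\<And>x. 0 \<le> f x" "\<And>x. f x \<le> 1"
  shows "integrable (measure_pmf M) f"
  by (rule measure_pmf.integrable_const_bound[where B=1]) (use assms in auto)

lemma rand_exp:
  fixes f :: "bool \<Rightarrow> real"
  assumes p: "0 \<le> lam / real n" "lam / real n \<le> 1" and f: "\<And>y. 0 \<le> f y" "\<And>y. f y \<le> 1"
  shows "measure_pmf.expectation (randomizer n lam x) f =
     (if x then 1 - lam / real n / 2 else lam / real n / 2) * f True +
     (1 - (if x then 1 - lam / real n / 2 else lam / real n / 2)) * f False"
proof -
  have "measure_pmf.expectation (randomizer n lam x) f =
     measure_pmf.expectation (bernoulli_pmf (lam / real n)) (\<lambda>b. measure_pmf.expectation (if b then bernoulli_pmf (1/2) else return_pmf x) f)"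
    unfolding randomizer_def by (rule integral_bind_pmf_real[where B=1]) (use f in auto)
  also have "\<dots> = (lam / real n) * (f True / 2 + f False / 2) + (1 - lam / real n) * f x"
    using p by (simp add: algebra_simps)
  finally show ?thesis by (cases x) (simp_all add: algebra_simps)
qed

lemma C_exp:
  fixes H :: "nat \<Rightarrow> real"
  assumes p: "0 \<le> lam / real n" "lam / real n \<le> 1" and H: "\<And>k. 0 \<le> H k" "\<And>k. H k \<le> 1"
  shows "measure_pmf.expectation (C n lam xs) H =
    measure_pmf.expectation (W (lam / real n) xs) (\<lambda>w. measure_pmf.expectation (Bh (snd w)) (\<lambda>u. H (fst w + u)))"
proof -
  have "measure_pmf.expectation (C n lam xs) H =
    measure_pmf.expectation (W (lam / real n) xs) (\<lambda>w. measure_pmf.expectation ((\<lambda>(c, b). map_pmf (\<lambda>u. c + u) (Bh b)) w) H)"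
    unfolding C_W[OF p] by (rule integral_bind_pmf_real[where B=1]) (use H in auto)
  also have "\<dots> = measure_pmf.expectation (W (lam / real n) xs) (\<lambda>w. measure_pmf.expectation (Bh (snd w)) (\<lambda>u. H (fst w + u)))"
    by (simp add: split_beta)
  finally show ?thesis .
qed

lemma prob_decomp:
  fixes T :: "bool list set"
  assumes len: "length (xs1 @ x # xs2) = n" and p: "0 \<le> lam / real n" "lam / real n \<le> 1"
  defines "G \<equiv> (\<lambda>k. measure_pmf.prob (shuffle (canon n k)) T)"
  defines "r \<equiv> (if x then 1 - lam / real n / 2 else lam / real n / 2)"
  shows "measure_pmf.prob (shuffled_bitsum n lam (xs1 @ x # xs2)) T =
     r * measure_pmf.expectation (W (lam / real n) (xs1 @ xs2)) (\<lambda>w. measure_pmf.expectation (Bh (snd w)) (\<lambda>u. G (fst w + Suc u)))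
     + (1 - r) * measure_pmf.expectation (W (lam / real n) (xs1 @ xs2)) (\<lambda>w. measure_pmf.expectation (Bh (snd w)) (\<lambda>u. G (fst w + u)))"
proof -
  have G: "0 \<le> G k" "G k \<le> 1" for k by (simp_all add: G_def)
  have "measure_pmf.prob (shuffled_bitsum n lam (xs1 @ x # xs2)) T = measure_pmf.expectation (C n lam (xs1 @ x # xs2)) G"
    unfolding G_def by (rule prob_bitsum[OF len])
  also have "\<dots> = measure_pmf.expectation (randomizer n lam x) (\<lambda>y. measure_pmf.expectation (map_pmf (\<lambda>k. k + of_bool y) (C n lam (xs1 @ xs2))) G)"
    unfolding C_middle by (rule integral_bind_pmf_real[where B=1]) (use G in auto)
  also have "\<dots> = measure_pmf.expectation (randomizer n lam x) (\<lambda>y. measure_pmf.expectation (C n lam (xs1 @ xs2)) (\<lambda>k. G (k + of_bool y)))"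
    by simp
  also have "\<dots> = measure_pmf.expectation (randomizer n lam x) (\<lambda>y.
      measure_pmf.expectation (W (lam / real n) (xs1 @ xs2)) (\<lambda>w. measure_pmf.expectation (Bh (snd w)) (\<lambda>u. G (fst w + u + of_bool y))))"
    by (subst C_exp[OF p]) (use G in \<open>auto simp: add.assoc\<close>)
  also have "\<dots> = r * measure_pmf.expectation (W (lam / real n) (xs1 @ xs2)) (\<lambda>w. measure_pmf.expectation (Bh (snd w)) (\<lambda>u. G (fst w + Suc u)))
     + (1 - r) * measure_pmf.expectation (W (lam / real n) (xs1 @ xs2)) (\<lambda>w. measure_pmf.expectation (Bh (snd w)) (\<lambda>u. G (fst w + u)))"
    unfolding r_def
    by (subst rand_exp[OF p]) (auto intro!: exp01 G)
  finally show ?thesis .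
qed

lemma pointwise_main:
  fixes A B r r' q E K \<eta> I :: real
  assumes q: "0 \<le> q" "q \<le> 1/2" and AB: "0 \<le> A" "A \<le> 1" "0 \<le> B" "B \<le> 1" and E: "1 \<le> E"
    and eta: "0 \<le> \<eta>" and key: "(1 - q) * K + q \<le> E * (q * K + (1 - q))"
    and dp1: "A \<le> K * B + \<eta>" and dp2: "B \<le> K * A + \<eta>"
    and r: "r = (if x then 1 - q else q)" and r': "r' = (if x' then 1 - q else q)" and I: "0 \<le> I"
  shows "r * A + (1 - r) * B \<le> E * (r' * A + (1 - r') * B) + (I + \<eta>)"
proof -
  have "r * A + (1 - r) * B \<le> E * (r' * A + (1 - r') * B) + \<eta>"
  proof (cases "x = x'")
    case True
    hence rr: "r' = r" using r r' by simp
    have r01: "0 \<le> r" "r \<le> 1" using r q by auto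
    have "0 \<le> r * A + (1 - r) * B" using r01 AB by simp
    hence "r * A + (1 - r) * B \<le> E * (r * A + (1 - r) * B)" using E by (simp add: mult_le_cancel_right1)
    thus ?thesis using rr eta by simp
  next
    case False
    show ?thesis
    proof (cases x)
      case True
      hence "r = 1 - q" "r' = q" using False r r' by auto
      thus ?thesis using scalar_comb[OF q AB(1) AB(3) E eta key dp1] by simp
    next
      case xf: False
      hence rr: "r = q" "r' = 1 - q" using False r r' by auto
      show ?thesis unfolding rr using scalar_comb[OF q AB(3) AB(1) E eta key dp2] by (simp add: algebra_simps)
    qed
  qed
  thus ?thesis using I by simp
qed

theorem corollary4p7:
  fixes \<delta> lam :: real and n :: nat
  assumes "0 < \<delta>" and "\<delta> < 1"
    and "14 * ln (4 / \<delta>) \<le> lam" and "lam \<le> real n"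
  shows "diff_private n (shuffled_bitsum n lam)
           (sqrt (32 * ln (4 / \<delta>) / (lam - sqrt (2 * lam * ln (2 / \<delta>))))
              * (1 - (lam - sqrt (2 * lam * ln (2 / \<delta>))) / real n))
           \<delta>"
proof -
  note d = assms(1,2,3)
  define ee where "ee = e0 \<delta> lam"
  define a where "a = aa \<delta> lam"
  define \<epsilon> where "\<epsilon> = ee * (1 - a / real n)"
  have eps_eq: "sqrt (32 * ln (4 / \<delta>) / (lam - sqrt (2 * lam * ln (2 / \<delta>))))
              * (1 - (lam - sqrt (2 * lam * ln (2 / \<delta>))) / real n) = \<epsilon>"
    by (simp add: \<epsilon>_def ee_def a_def e0_def[OF d] aa_def[OF d] LL_def[OF d] L2_def[OF d])
  have lp: "0 < lam" by (rule lam_pos[OF d])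
  have npos: "0 < real n" using lp assms(4) by linarith
  define p where "p = lam / real n"
  define q where "q = p / 2"
  have p01: "0 \<le> p" "p \<le> 1" using lp npos assms(4) by (auto simp: p_def)
  have q: "0 \<le> q" "q \<le> 1/2" using p01 by (auto simp: q_def)
  have a: "0 < a" "a \<le> lam" using aa_props[OF d] by (auto simp: a_def)
  have ee0: "0 \<le> ee" using e0_nonneg[OF d] by (simp add: ee_def)
  have "a / real n \<le> 1" using a assms(4) npos by (simp add: divide_le_eq)
  hence eps0: "0 \<le> \<epsilon>" unfolding \<epsilon>_def using ee0 by simp
  have E1: "1 \<le> exp \<epsilon>" using eps0 by simp
  have "(1 - 2 * q) * ee \<le> \<epsilon>"
  proof -
    have "1 - 2 * q \<le> 1 - a / real n" using a npos by (simp add: q_def p_def divide_right_mono)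
    thus ?thesis unfolding \<epsilon>_def using ee0 by (simp add: mult.commute mult_left_mono)
  qed
  hence "exp ((1 - 2 * q) * ee) \<le> exp \<epsilon>" by simp
  moreover have "0 \<le> q * exp ee + (1 - q)" using q by simp
  ultimately have "exp ((1 - 2 * q) * ee) * (q * exp ee + (1 - q)) \<le> exp \<epsilon> * (q * exp ee + (1 - q))"
    by (rule mult_right_mono)
  with key_exp_ineq[OF q ee0] have key: "(1 - q) * exp ee + q \<le> exp \<epsilon> * (q * exp ee + (1 - q))"
    by linarith
  show ?thesis
    unfolding eps_eq diff_private_def
  proof (intro allI impI)
    fix X X' :: "bool list" and T :: "bool list set"
    assume lX: "length X = n" and lX': "length X' = n" and nb: "neighbouring X X'"
    from nb obtain i where i: "i < length X" and eq: "\<And>j. j \<noteq> i \<Longrightarrow> X ! j = X' ! j"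
      unfolding neighbouring_def by blast
    define xs1 where "xs1 = take i X"
    define xs2 where "xs2 = drop (Suc i) X"
    have X: "X = xs1 @ X ! i # xs2" unfolding xs1_def xs2_def using i by (simp add: id_take_nth_drop)
    have t: "take i X' = xs1" unfolding xs1_def
      by (rule nth_equalityI) (use i lX lX' eq in auto)
    have dr: "drop (Suc i) X' = xs2" unfolding xs2_def
      by (rule nth_equalityI) (use i lX lX' eq in auto)
    have X': "X' = xs1 @ X' ! i # xs2" using i lX lX' t dr by (metis id_take_nth_drop)
    define Z where "Z = xs1 @ xs2"
    have lZ: "length Z = n - 1" using X lX unfolding Z_def by (metis length_append length_Cons diff_Suc_1 add_Suc_right)
    define G where "G = (\<lambda>k. measure_pmf.prob (shuffle (canon n k)) T)"
    have G: "0 \<le> G k" "G k \<le> 1" for k by (simp_all add: G_def)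
    define WW where "WW = W p Z"
    define A where "A = (\<lambda>w. measure_pmf.expectation (Bh (snd w)) (\<lambda>u. G (fst w + Suc u)))"
    define B where "B = (\<lambda>w. measure_pmf.expectation (Bh (snd w)) (\<lambda>u. G (fst w + u)))"
    have A01: "0 \<le> A w" "A w \<le> 1" for w unfolding A_def by (intro exp01 G)+
    have B01: "0 \<le> B w" "B w \<le> 1" for w unfolding B_def by (intro exp01 G)+
    define r where "r = (if X ! i then 1 - q else q)"
    define r' where "r' = (if X' ! i then 1 - q else q)"
    have r01: "0 \<le> r" "r \<le> 1" "0 \<le> r'" "r' \<le> 1" using q by (auto simp: r_def r'_def)
    have PX: "measure_pmf.prob (shuffled_bitsum n lam X) T = r * measure_pmf.expectation WW A + (1 - r) * measure_pmf.expectation WW B"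
      using prob_decomp[of xs1 "X ! i" xs2 n lam T] X lX p01
      by (simp add: WW_def A_def B_def G_def r_def Z_def q_def p_def)
    have PX': "measure_pmf.prob (shuffled_bitsum n lam X') T = r' * measure_pmf.expectation WW A + (1 - r') * measure_pmf.expectation WW B"
      using prob_decomp[of xs1 "X' ! i" xs2 n lam T] X' lX' p01
      by (simp add: WW_def A_def B_def G_def r'_def Z_def q_def p_def)
    define I :: "nat \<times> nat \<Rightarrow> real" where "I = indicator {w. real (snd w) < a}"
    have pt: "r * A w + (1 - r) * B w \<le> exp \<epsilon> * (r' * A w + (1 - r') * B w) + (I w + \<delta> / 8)" for w
    proof (cases "real (snd w) < a")
      case True
      have "r * A w + (1 - r) * B w \<le> r * 1 + (1 - r) * 1"
        using A01[of w] B01[of w] r01 by (intro add_mono mult_left_mono) auto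
      moreover have "0 \<le> exp \<epsilon> * (r' * A w + (1 - r') * B w)"
        using A01[of w] B01[of w] r01 by simp
      ultimately show ?thesis using True d by (simp add: I_def)
    next
      case False
      define b where "b = snd w"
      define c where "c = fst w"
      have ab: "a \<le> real b" using False by (simp add: b_def)
      have b0: "0 < b" using ab a by linarith
      define y where "y = sqrt (2 * L8 \<delta> / real b)"
      define tt where "tt = y * real b / 2"
      have cl: "0 \<le> tt" "2 * tt < real b" "real b / 2 + tt + 1 \<le> exp ee * (real b / 2 - tt)"
          "exp (- 2 * tt\<^sup>2 / real b) = \<delta> / 8"
        using cond_lemma[OF d, of "real b"] ab unfolding tt_def y_def ee_def a_def by auto
      define h where "h = (\<lambda>k. G (c + k))"
      have h: "0 \<le> h k" "h k \<le> 1" for k using G by (auto simp: h_def)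
      have Aw: "A w = measure_pmf.expectation (Bh b) (\<lambda>u. h (Suc u))" by (simp add: A_def h_def b_def c_def)
      have Bw: "B w = measure_pmf.expectation (Bh b) h" by (simp add: B_def h_def b_def c_def)
      have dp1: "A w \<le> exp ee * B w + \<delta> / 8"
        using shift_dp1[of h b tt ee, OF h b0 cl(1) cl(2) cl(3)] cl(4) Aw Bw by simp
      have dp2: "B w \<le> exp ee * A w + \<delta> / 8"
        using shift_dp2[of h b tt ee, OF h b0 cl(1) cl(2) cl(3)] cl(4) Aw Bw by simp
      show ?thesis
        by (rule pointwise_main[OF q A01[of w] B01[of w] E1 _ key dp1 dp2 r_def r'_def])
           (use d in \<open>auto simp: I_def\<close>)
    qed
    have iA: "integrable (measure_pmf WW) A" by (intro int01 A01)
    have iB: "integrable (measure_pmf WW) B" by (intro int01 B01)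
    have iI: "integrable (measure_pmf WW) I" by (intro int01) (auto simp: I_def)
    have "measure_pmf.prob (shuffled_bitsum n lam X) T = measure_pmf.expectation WW (\<lambda>w. r * A w + (1 - r) * B w)"
      using iA iB by (simp add: PX)
    also have "\<dots> \<le> measure_pmf.expectation WW (\<lambda>w. exp \<epsilon> * (r' * A w + (1 - r') * B w) + (I w + \<delta> / 8))"
      by (intro integral_mono pt) (use iA iB iI in auto)
    also have "\<dots> = exp \<epsilon> * (r' * measure_pmf.expectation WW A + (1 - r') * measure_pmf.expectation WW B)
        + (measure_pmf.expectation WW I + \<delta> / 8)"
      using iA iB iI by simp
    also have "measure_pmf.expectation WW I = measure_pmf.prob WW {w. real (snd w) < a}"
      by (simp add: I_def)
    also have "\<dots> \<le> 7/8 * \<delta>"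
    proof -
      define s where "s = sqrt (2 * L2 \<delta> / lam)"
      have s0: "0 \<le> s" using chernoff_num[OF d assms(4)] by (simp add: s_def)
      have "measure_pmf.prob WW {w. real (snd w) < a} \<le> exp (s * a) * (1 - p + p * exp (- s)) ^ length Z"
        unfolding WW_def by (rule W_tail[OF p01 s0])
      also have "\<dots> \<le> 7/8 * \<delta>"
        using chernoff_num[OF d assms(4)] lZ by (simp add: s_def a_def p_def)
      finally show ?thesis .
    qed
    finally have "measure_pmf.prob (shuffled_bitsum n lam X) T \<le> exp \<epsilon> * measure_pmf.prob (shuffled_bitsum n lam X') T + \<delta>"
      unfolding PX' by simp
    thus "measure_pmf.prob (shuffled_bitsum n lam X) T \<le> exp \<epsilon> * measure_pmf.prob (shuffled_bitsum n lam X') T + \<delta>" .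
  qed
qed


end
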